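(* In a Gibbs-type feature model with parameters $\alpha<1$, $\theta>-\alpha$ and weights $(V_{n,k})$, let $\mathbf Z^{(n)}$ be a sample with $K_n=k$ observed features and, for $m\ge1$, let $K^{(n)}_m$ be the number of distinct features displayed by individuals $n+1,\dots,n+m$ that are not among the $k$ features observed in $\mathbf Z^{(n)}$. Then for every $y\ge0$, $$P(K^{(n)}_m=y\mid\mathbf Z^{(n)})=\binom{k+y}{k}\frac{V_{n+m,k+y}}{V_{n,k}}\{(\theta+n)_m\}^{k+y}\{c_{n,m}(\theta,\alpha)\}^y,$$ where $c_{n,m}(\theta,\alpha)=\frac{(\theta+\alpha)_n}{\alpha}\Big(\frac{(\theta+\alpha+n)_m}{(\theta+n)_m}-1\Big)$ if $\alpha<0$, and $c_{n,m}(\theta,\alpha)=(\theta+1)_{n-1}\{g_{n+m}(\theta,\alpha)-g_n(\theta,\alpha)\}$ if $\alpha\in[0,1)$, with $g_n(\theta,\alpha)=\sum_{i=1}^n\frac{(\theta+\alpha)_{i-1}}{(\theta+1)_{i-1}}$.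
   Context: Notation: $(x)_m=\Gamma(x+m)/\Gamma(x)$ (Pochhammer symbol); $[n]=\{1,\dots,n\}$. Individuals $i=1,2,\dots$ each display a finite (possibly empty) set of features, identified by almost surely distinct labels. For the sample $\mathbf Z^{(n)}=(Z_1,\dots,Z_n)$ of the first $n$ individuals, $K_n$ is the number of distinct features displayed, labelled $X_1,\dots,X_{K_n}$ in order of appearance; $A_{i,\ell}\in\{0,1\}$ indicates whether individual $i$ displays $X_\ell$, and $m_\ell=\sum_{i=1}^nA_{i,\ell}\in[n]$. The ordered feature allocation is $F_n=(B_{n,1},\dots,B_{n,K_n})$, $B_{n,\ell}=\{i\in[n]:A_{i,\ell}=1\}$. The model admits an exchangeable feature probability function (EFPF) if there are symmetric functions $\pi_n:\bigcup_{k\ge0}[n]^k\to[0,1]$ with $P(F_n=f_n)=\pi_n(m_1,\dots,m_k)$ for every ordered feature allocation $f_n$ of $[n]$ (a sequence of $k$ nonempty subsets of $[n]$ with sizes $m_1,\dots,m_k$), all orderings of the same collection of sets being equally likely; the laws for different $n$ are consistent. The model is a Gibbs-type feature model with parameters $\alpha<1$, $\theta>-\alpha$ if $\pi_n(m_1,\dots,m_k)=V_{n,k}\prod_{\ell=1}^k(1-\alpha)_{m_\ell-1}(\theta+\alpha)_{n-m_\ell}$ for nonnegative weights $(V_{n,k})_{n\ge1,k\ge0}$ satisfying $V_{n,k}=\sum_{j\ge0}\frac{(k+j)!}{j!\,k!}\{(\theta+\alpha)_n\}^j(\theta+n)^kV_{n+1,k+j}$. *)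

theory Defs
  imports "HOL-Probability.Probability"
begin

definition is_ofa :: "nat \<Rightarrow> nat set list \<Rightarrow> bool" where
  "is_ofa n f \<longleftrightarrow> (\<forall>B \<in> set f. B \<noteq> {} \<and> B \<subseteq> {1..n})"

definition restr :: "nat \<Rightarrow> nat set list \<Rightarrow> nat set list" where
  "restr n f = filter (\<lambda>B. B \<noteq> {}) (map (\<lambda>B. B \<inter> {1..n}) f)"

definition gibbs_efpf :: "real \<Rightarrow> real \<Rightarrow> (nat \<Rightarrow> nat \<Rightarrow> real) \<Rightarrow> nat \<Rightarrow> nat list \<Rightarrow> real" where
  "gibbs_efpf \<alpha> \<theta> V n ms = V n (length ms) *
     prod_list (map (\<lambda>m. pochhammer (1 - \<alpha>) (m - 1) * pochhammer (\<theta> + \<alpha>) (n - m)) ms)"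

definition gibbs_weights :: "real \<Rightarrow> real \<Rightarrow> (nat \<Rightarrow> nat \<Rightarrow> real) \<Rightarrow> bool" where
  "gibbs_weights \<alpha> \<theta> V \<longleftrightarrow> \<alpha> < 1 \<and> \<theta> > - \<alpha> \<and>
     (\<forall>n k. n \<ge> 1 \<longrightarrow> V n k \<ge> 0) \<and>
     (\<forall>n k. n \<ge> 1 \<longrightarrow>
        (\<lambda>j. real (fact (k + j)) / (real (fact j) * real (fact k))
              * (pochhammer (\<theta> + \<alpha>) n) ^ j * (\<theta> + real n) ^ k * V (n + 1) (k + j))
        sums V n k)"

definition g_fun :: "nat \<Rightarrow> real \<Rightarrow> real \<Rightarrow> real" where
  "g_fun n \<theta> \<alpha> = (\<Sum>i=1..n. pochhammer (\<theta> + \<alpha>) (i - 1) / pochhammer (\<theta> + 1) (i - 1))"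

definition c_fun :: "nat \<Rightarrow> nat \<Rightarrow> real \<Rightarrow> real \<Rightarrow> real" where
  "c_fun n m \<theta> \<alpha> =
     (if \<alpha> < 0
      then pochhammer (\<theta> + \<alpha>) n / \<alpha> *
             (pochhammer (\<theta> + \<alpha> + real n) m / pochhammer (\<theta> + real n) m - 1)
      else pochhammer (\<theta> + 1) (n - 1) * (g_fun (n + m) \<theta> \<alpha> - g_fun n \<theta> \<alpha>))"

end

theory Submission imports Defs begin

lemma restr_Nil[simp]: "restr N [] = []" by (simp add: restr_def)
lemma restr_Cons: "restr N (B#g) = (if B \<inter> {1..N} = {} then restr N g else (B \<inter> {1..N}) # restr N g)"
  by (simp add: restr_def)
lemma is_ofa_Nil[simp]: "is_ofa N []" by (simp add: is_ofa_def)
lemma is_ofa_Cons[simp]: "is_ofa N (B#g) \<longleftrightarrow> B \<noteq> {} \<and> B \<subseteq> {1..N} \<and> is_ofa N g"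
  by (simp add: is_ofa_def)

lemma restr_restr: "a \<le> b \<Longrightarrow> restr a (restr b g) = restr a g"
  by (induction g) (auto simp: restr_Cons)

lemma restr_id: "is_ofa N g \<Longrightarrow> restr N g = g"
  by (induction g) (auto simp: restr_Cons Int_absorb2)

lemma length_restr: "length (restr N g) \<le> length g"
  by (simp add: restr_def length_filter_le)

lemma is_ofa_restr: "is_ofa N (restr N g)"
  by (induction g) (auto simp: restr_Cons)

lemma finite_ofa: "finite {g. is_ofa N g \<and> length g = L}"
  by (rule finite_subset[of _ "{xs. set xs \<subseteq> Pow {1..N} \<and> length xs = L}"])
     (auto simp: is_ofa_def intro!: finite_lists_length_eq)

definition fac :: "real \<Rightarrow> real \<Rightarrow> nat \<Rightarrow> nat set \<Rightarrow> real" where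
  "fac \<alpha> \<theta> N B = pochhammer (1 - \<alpha>) (card B - 1) * pochhammer (\<theta> + \<alpha>) (N - card B)"
definition WW :: "real \<Rightarrow> real \<Rightarrow> nat \<Rightarrow> nat set list \<Rightarrow> real" where
  "WW \<alpha> \<theta> N g = prod_list (map (fac \<alpha> \<theta> N) g)"

lemma WW_Nil[simp]: "WW \<alpha> \<theta> N [] = 1" by (simp add: WW_def)
lemma WW_Cons[simp]: "WW \<alpha> \<theta> N (B#g) = fac \<alpha> \<theta> N B * WW \<alpha> \<theta> N g" by (simp add: WW_def)

lemma efpf_WW: "gibbs_efpf \<alpha> \<theta> V N (map card g) = V N (length g) * WW \<alpha> \<theta> N g"
  unfolding gibbs_efpf_def WW_def fac_def[abs_def] map_map comp_def by simp

lemma fac_new: "fac \<alpha> \<theta> (Suc N) {Suc N} = pochhammer (\<theta> + \<alpha>) N"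
  by (simp add: fac_def)

lemma fac_step:
  assumes "B \<noteq> {}" "B \<subseteq> {1..N}"
  shows "fac \<alpha> \<theta> (Suc N) B + fac \<alpha> \<theta> (Suc N) (insert (Suc N) B) = (\<theta> + real N) * fac \<alpha> \<theta> N B"
proof -
  have fin: "finite B" using assms finite_subset by blast
  have nin: "Suc N \<notin> B" using assms by auto
  define s where "s = card B"
  have s1: "s \<ge> 1" using assms fin by (simp add: s_def Suc_leI card_gt_0_iff)
  have sN: "s \<le> N" using card_mono[OF _ assms(2)] by (simp add: s_def)
  have ci: "card (insert (Suc N) B) = Suc s" using fin nin by (simp add: s_def)
  have e1: "Suc N - s = Suc (N - s)" using sN by simp
  have e2: "s = Suc (s - 1)" using s1 by simp
  have r1: "real (N - s) = real N - real s" using sN by simp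
  have r2: "real (s - 1) = real s - 1" using s1 by simp
  have f1: "fac \<alpha> \<theta> (Suc N) B = pochhammer (1-\<alpha>) (s-1) * pochhammer (\<theta>+\<alpha>) (N-s) * (\<theta>+\<alpha>+real (N-s))"
    by (simp add: fac_def s_def[symmetric] e1 pochhammer_Suc)
  have f2: "fac \<alpha> \<theta> (Suc N) (insert (Suc N) B) = pochhammer (1-\<alpha>) (s-1) * (1-\<alpha>+real (s-1)) * pochhammer (\<theta>+\<alpha>) (N-s)"
    by (simp add: fac_def ci, subst e2, simp add: pochhammer_Suc)
  have f3: "fac \<alpha> \<theta> N B = pochhammer (1-\<alpha>) (s-1) * pochhammer (\<theta>+\<alpha>) (N-s)"
    by (simp add: fac_def s_def)
  show ?thesis unfolding f1 f2 f3 r1 r2 by (simp add: algebra_simps)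
qed

definition Ext :: "nat \<Rightarrow> nat set list \<Rightarrow> nat \<Rightarrow> nat set list set" where
  "Ext N h L = {g. is_ofa (Suc N) g \<and> restr N g = h \<and> length g = L}"

lemma finite_Ext: "finite (Ext N h L)"
  by (rule finite_subset[OF _ finite_ofa[of "Suc N" L]]) (auto simp: Ext_def)

lemma Ext_0: "Ext N h 0 = (if h = [] then {[]} else {})"
  by (auto simp: Ext_def)

lemma block_cases:
  assumes "B \<noteq> {}" "B \<subseteq> {1..Suc N}"
  shows "(B \<inter> {1..N} = {} \<and> B = {Suc N}) \<or> (B \<inter> {1..N} \<noteq> {} \<and> (B = B \<inter> {1..N} \<or> B = insert (Suc N) (B \<inter> {1..N})))"
proof (cases "B \<inter> {1..N} = {}")
  case True
  have "B \<subseteq> {Suc N}"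
  proof
    fix x assume "x \<in> B"
    with assms True have "1 \<le> x" "x \<le> Suc N" "x \<notin> {1..N}" by auto
    thus "x \<in> {Suc N}" by simp
  qed
  with assms True show ?thesis by blast
next
  case False
  have "B \<subseteq> insert (Suc N) (B \<inter> {1..N})"
  proof
    fix x assume "x \<in> B"
    with assms have "1 \<le> x" "x \<le> Suc N" by auto
    thus "x \<in> insert (Suc N) (B \<inter> {1..N})" using \<open>x \<in> B\<close> by (cases "x = Suc N") auto
  qed
  hence "Suc N \<in> B \<Longrightarrow> B = insert (Suc N) (B \<inter> {1..N})" by blast
  moreover have "Suc N \<notin> B \<Longrightarrow> B = B \<inter> {1..N}" using \<open>B \<subseteq> insert _ _\<close> by blast
  ultimately show ?thesis using False by blast
qed

lemma Ext_Cons_mem: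
  assumes "is_ofa N h"
  shows "(B#g' \<in> Ext N h (Suc L)) \<longleftrightarrow> (B = {Suc N} \<and> g' \<in> Ext N h L) \<or>
     (\<exists>b h'. h = b#h' \<and> (B = b \<or> B = insert (Suc N) b) \<and> g' \<in> Ext N h' L)"
proof
  assume A: "B#g' \<in> Ext N h (Suc L)"
  hence B: "B \<noteq> {}" "B \<subseteq> {1..Suc N}" and g': "is_ofa (Suc N) g'" "length g' = L"
    and r: "restr N (B#g') = h" by (auto simp: Ext_def)
  from block_cases[OF B] show "(B = {Suc N} \<and> g' \<in> Ext N h L) \<or>
     (\<exists>b h'. h = b#h' \<and> (B = b \<or> B = insert (Suc N) b) \<and> g' \<in> Ext N h' L)"
  proof
    assume "B \<inter> {1..N} = {} \<and> B = {Suc N}"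
    with r g' show ?thesis by (auto simp: Ext_def restr_Cons)
  next
    assume H: "B \<inter> {1..N} \<noteq> {} \<and> (B = B \<inter> {1..N} \<or> B = insert (Suc N) (B \<inter> {1..N}))"
    hence "h = (B \<inter> {1..N}) # restr N g'" using r by (simp add: restr_Cons)
    with H g' show ?thesis by (auto simp: Ext_def)
  qed
next
  assume "(B = {Suc N} \<and> g' \<in> Ext N h L) \<or>
     (\<exists>b h'. h = b#h' \<and> (B = b \<or> B = insert (Suc N) b) \<and> g' \<in> Ext N h' L)"
  thus "B#g' \<in> Ext N h (Suc L)"
  proof
    assume "B = {Suc N} \<and> g' \<in> Ext N h L"
    thus ?thesis by (auto simp: Ext_def restr_Cons)
  next
    assume "\<exists>b h'. h = b#h' \<and> (B = b \<or> B = insert (Suc N) b) \<and> g' \<in> Ext N h' L"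
    then obtain b h' where hb: "h = b#h'" and Bb: "B = b \<or> B = insert (Suc N) b" and g': "g' \<in> Ext N h' L" by blast
    have b: "b \<noteq> {}" "b \<subseteq> {1..N}" using assms hb by auto
    hence "B \<inter> {1..N} = b" using Bb by auto
    moreover have "B \<noteq> {}" "B \<subseteq> {1..Suc N}" using b Bb by auto
    ultimately show ?thesis using g' hb b by (auto simp: Ext_def restr_Cons)
  qed
qed

lemma Ext_Suc_split: "g \<in> Ext N h (Suc L) \<longleftrightarrow> (\<exists>B g'. g = B#g' \<and> B#g' \<in> Ext N h (Suc L))"
  by (cases g) (auto simp: Ext_def)

lemma Ext_Suc_Nil: "Ext N [] (Suc L) = Cons {Suc N} ` Ext N [] L"
  by (rule set_eqI, subst Ext_Suc_split, subst Ext_Cons_mem) auto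

lemma Ext_Suc_Cons: assumes "is_ofa N (b#h')"
  shows "Ext N (b#h') (Suc L) = Cons {Suc N} ` Ext N (b#h') L \<union>
     (Cons b ` Ext N h' L \<union> Cons (insert (Suc N) b) ` Ext N h' L)"
  by (rule set_eqI, subst Ext_Suc_split, subst Ext_Cons_mem[OF assms]) auto

lemma sum_Cons_img: "(\<Sum>g\<in>Cons B ` A. WW \<alpha> \<theta> N g) = fac \<alpha> \<theta> N B * (\<Sum>g\<in>A. WW \<alpha> \<theta> N g)"
  by (subst sum.reindex) (auto simp: sum_distrib_left)

lemma one_step:
  assumes "is_ofa N h"
  shows "(\<Sum>g\<in>Ext N h L. WW \<alpha> \<theta> (Suc N) g) = real (L choose length h) *
     (pochhammer (\<theta>+\<alpha>) N)^(L - length h) * (\<theta> + real N)^(length h) * WW \<alpha> \<theta> N h"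
  using assms
proof (induction L arbitrary: h)
  case 0
  then show ?case by (simp add: Ext_0)
next
  case (Suc L)
  define a where "a = pochhammer (\<theta>+\<alpha>) N"
  define b where "b = \<theta> + real N"
  show ?case
  proof (cases h)
    case Nil
    have "(\<Sum>g\<in>Ext N h (Suc L). WW \<alpha> \<theta> (Suc N) g) = a * (\<Sum>g\<in>Ext N h L. WW \<alpha> \<theta> (Suc N) g)"
      using Nil by (simp add: Ext_Suc_Nil sum_Cons_img fac_new a_def)
    also have "\<dots> = a * a ^ L" using Suc.IH[OF Suc.prems] Nil by (simp add: a_def)
    finally show ?thesis using Nil by (simp add: a_def)
  next
    case (Cons c h')
    have c: "c \<noteq> {}" "c \<subseteq> {1..N}" and h': "is_ofa N h'" using Suc.prems Cons by auto
    have nin: "Suc N \<notin> c" using c by auto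
    have d1: "Cons {Suc N} ` Ext N h L \<inter> (Cons c ` Ext N h' L \<union> Cons (insert (Suc N) c) ` Ext N h' L) = {}"
      using c nin by auto
    have d2: "Cons c ` Ext N h' L \<inter> Cons (insert (Suc N) c) ` Ext N h' L = {}"
      using nin by auto
    define K where "K = length h'"
    have "(\<Sum>g\<in>Ext N h (Suc L). WW \<alpha> \<theta> (Suc N) g) =
       a * (\<Sum>g\<in>Ext N h L. WW \<alpha> \<theta> (Suc N) g) + (fac \<alpha> \<theta> (Suc N) c + fac \<alpha> \<theta> (Suc N) (insert (Suc N) c)) * (\<Sum>g\<in>Ext N h' L. WW \<alpha> \<theta> (Suc N) g)"
      unfolding Cons Ext_Suc_Cons[OF Suc.prems[unfolded Cons]]
      apply (subst sum.union_disjoint)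
         apply (simp_all add: finite_Ext d1[unfolded Cons])
      apply (subst sum.union_disjoint)
         apply (simp_all add: finite_Ext d2 sum_Cons_img fac_new a_def algebra_simps)
      done
    also have "\<dots> = a * (real (L choose Suc K) * a^(L - Suc K) * b^(Suc K) * (fac \<alpha> \<theta> N c * WW \<alpha> \<theta> N h'))
       + b * fac \<alpha> \<theta> N c * (real (L choose K) * a^(L - K) * b^K * WW \<alpha> \<theta> N h')"
      using Suc.IH[OF Suc.prems] Suc.IH[OF h'] fac_step[OF c] Cons
      by (simp add: a_def b_def K_def)
    also have "\<dots> = real (Suc L choose Suc K) * a^(Suc L - Suc K) * b^(Suc K) * (fac \<alpha> \<theta> N c * WW \<alpha> \<theta> N h')"
    proof (cases "K \<le> L")
      case True
      show ?thesis
      proof (cases "K = L")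
        case True
        thus ?thesis by (simp add: algebra_simps)
      next
        case False
        with \<open>K \<le> L\<close> have "Suc K \<le> L" by simp
        hence e: "L - K = Suc (L - Suc K)" "Suc L - Suc K = Suc (L - Suc K)" by auto
        show ?thesis unfolding e by (simp add: algebra_simps)
      qed
    next
      case False
      thus ?thesis by (simp add: binomial_eq_0)
    qed
    finally show ?thesis using Cons by (simp add: a_def b_def K_def)
  qed
qed

lemma binom_sum:
  fixes a b c :: real
  shows "(\<Sum>L'\<le>L. real (L choose L') * a^(L-L') * b^L' * (real (L' choose k) * c^(L'-k))) =
     real (L choose k) * b^k * (b*c + a)^(L-k)"
proof (cases "k \<le> L")
  case False
  thus ?thesis by (auto intro!: sum.neutral simp: binomial_eq_0)
next
  case True
  then obtain r where L: "L = k + r" using le_Suc_ex by blast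
  let ?f = "\<lambda>L'. real (L choose L') * a^(L-L') * b^L' * (real (L' choose k) * c^(L'-k))"
  have U: "{..L} = {..<k} \<union> (\<lambda>j. k + j) ` {..r}" unfolding L
  proof (intro set_eqI iffI)
    fix x assume "x \<in> {..k+r}"
    hence "x \<le> k + r" by simp
    show "x \<in> {..<k} \<union> (\<lambda>j. k + j) ` {..r}"
    proof (cases "x < k")
      case False
      hence "x = k + (x - k)" "x - k \<in> {..r}" using \<open>x \<le> k + r\<close> by auto
      thus ?thesis by (metis UnI2 imageI)
    qed simp
  qed auto
  have "sum ?f {..L} = sum ?f {..<k} + sum ?f ((\<lambda>j. k + j) ` {..r})"
    unfolding U by (rule sum.union_disjoint) auto
  also have "sum ?f {..<k} = 0" by (auto intro!: sum.neutral simp: binomial_eq_0)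
  also have "sum ?f ((\<lambda>j. k + j) ` {..r}) = (\<Sum>j\<le>r. ?f (k + j))"
    by (subst sum.reindex) auto
  also have "\<dots> = (\<Sum>j\<le>r. real (L choose k) * b^k * (real (r choose j) * (b*c)^j * a^(r-j)))"
  proof (rule sum.cong[OF refl])
    fix j assume "j \<in> {..r}"
    hence j: "j \<le> r" by simp
    have cm: "(L choose (k+j)) * ((k+j) choose k) = (L choose k) * (r choose j)"
      using choose_mult[of k "k+j" L] j L by simp
    have "real (L choose (k+j)) * real ((k+j) choose k) = real (L choose k) * real (r choose j)"
      using arg_cong[OF cm, of real] by simp
    moreover have "L - (k+j) = r - j" using L by simp
    ultimately show "?f (k+j) = real (L choose k) * b^k * (real (r choose j) * (b*c)^j * a^(r-j))"
    proof -
      assume A1: "real (L choose (k+j)) * real ((k+j) choose k) = real (L choose k) * real (r choose j)"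
      assume A2: "L - (k+j) = r - j"
      have "?f (k+j) = (real (L choose (k+j)) * real ((k+j) choose k)) * a^(r-j) * (b^k * b^j) * c^j"
        using A2 by (simp add: power_add)
      also have "\<dots> = real (L choose k) * b^k * (real (r choose j) * (b*c)^j * a^(r-j))"
        unfolding A1 by (simp add: power_mult_distrib)
      finally show ?thesis .
    qed
  qed
  also have "\<dots> = real (L choose k) * b^k * (b*c + a)^r"
    by (simp add: binomial_ring[of "b*c" a r] sum_distrib_left)
  finally show ?thesis using L by simp
qed

lemma c_zero: "c_fun n 0 \<theta> \<alpha> = 0"
  by (simp add: c_fun_def)

lemma g_Suc: "g_fun (Suc k) \<theta> \<alpha> = g_fun k \<theta> \<alpha> + pochhammer (\<theta> + \<alpha>) k / pochhammer (\<theta> + 1) k"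
  by (simp add: g_fun_def sum.cl_ivl_Suc)

lemma c_rec:
  assumes "\<alpha> < 1" "\<theta> > -\<alpha>" "n \<ge> 1"
  shows "c_fun n (Suc m) \<theta> \<alpha> * pochhammer (\<theta> + real n) (Suc m) =
     c_fun n m \<theta> \<alpha> * pochhammer (\<theta> + real n) (Suc m) + pochhammer (\<theta>+\<alpha>) (n+m)"
proof -
  have tn: "\<theta> + real n > 0" using assms by simp
  have P0: "pochhammer (\<theta> + real n) m > 0" using pochhammer_pos[OF tn] by blast
  have t1: "\<theta> + real n + real m > 0" using tn by simp
  show ?thesis
  proof (cases "\<alpha> < 0")
    case True
    have pp: "pochhammer (\<theta>+\<alpha>) (n+m) = pochhammer (\<theta>+\<alpha>) n * pochhammer (\<theta>+\<alpha>+real n) m"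
      by (rule pochhammer_product')
    have alg: "\<And>A Q P x a :: real. P \<noteq> 0 \<Longrightarrow> x \<noteq> 0 \<Longrightarrow> a \<noteq> 0 \<Longrightarrow>
       A / a * (Q * (x + a) / (P * x) - 1) * (P * x) = A / a * (Q / P - 1) * (P * x) + A * Q"
      by (simp add: field_simps)
    have e: "\<theta> + \<alpha> + real n + real m = (\<theta> + real n + real m) + \<alpha>" by simp
    show ?thesis using True P0 t1 alg[of "pochhammer (\<theta> + real n) m" "\<theta> + real n + real m" \<alpha>
        "pochhammer (\<theta>+\<alpha>) n" "pochhammer (\<theta>+\<alpha>+real n) m"]
      unfolding c_fun_def pp pochhammer_Suc e by simp
  next
    case False
    have t1': "\<theta> + 1 > 0" using assms by simp
    define R where "R = pochhammer (\<theta>+1) (n-1)"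
    have e: "\<theta> + 1 + real (n - 1) = \<theta> + real n" using assms by (simp add: of_nat_diff)
    have RP: "R * pochhammer (\<theta> + real n) (Suc m) = pochhammer (\<theta>+1) (n+m)"
      unfolding R_def using pochhammer_product'[of "\<theta>+1" "n-1" "Suc m"] e assms by simp
    have Q0: "pochhammer (\<theta>+1) (n+m) > 0" using pochhammer_pos[OF t1'] by blast
    have "c_fun n (Suc m) \<theta> \<alpha> = c_fun n m \<theta> \<alpha> + R * (pochhammer (\<theta> + \<alpha>) (n+m) / pochhammer (\<theta> + 1) (n+m))"
      using False unfolding c_fun_def R_def by (simp add: g_Suc algebra_simps)
    hence "c_fun n (Suc m) \<theta> \<alpha> * pochhammer (\<theta> + real n) (Suc m) =
       c_fun n m \<theta> \<alpha> * pochhammer (\<theta> + real n) (Suc m) + (R * pochhammer (\<theta> + real n) (Suc m)) * (pochhammer (\<theta> + \<alpha>) (n+m) / pochhammer (\<theta> + 1) (n+m))"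
      by (simp add: algebra_simps)
    thus ?thesis unfolding RP using Q0 by simp
  qed
qed

definition G :: "nat \<Rightarrow> nat set list \<Rightarrow> nat \<Rightarrow> nat \<Rightarrow> nat set list set" where
  "G n f N L = {g. is_ofa N g \<and> restr n g = f \<and> length g = L}"

lemma finite_G: "finite (G n f N L)"
  by (rule finite_subset[OF _ finite_ofa[of N L]]) (auto simp: G_def)

lemma multi:
  assumes f: "is_ofa n f" and ab: "\<alpha> < 1" "\<theta> > -\<alpha>" "n \<ge> 1"
  shows "(\<Sum>g\<in>G n f (n+m) L. WW \<alpha> \<theta> (n+m) g) = real (L choose length f) *
     (pochhammer (\<theta> + real n) m)^L * (c_fun n m \<theta> \<alpha>)^(L - length f) * WW \<alpha> \<theta> n f"
proof (induction m arbitrary: L)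
  case 0
  have "G n f n L = (if L = length f then {f} else {})"
  proof -
    have mem: "\<And>g. g \<in> G n f n L \<longleftrightarrow> g = f \<and> L = length f"
    proof
      fix g assume "g \<in> G n f n L"
      hence "is_ofa n g" "restr n g = f" "length g = L" by (simp_all add: G_def)
      thus "g = f \<and> L = length f" using restr_id[of n g] by simp
    next
      fix g assume "g = f \<and> L = length f"
      thus "g \<in> G n f n L" using f restr_id[OF f] by (simp add: G_def)
    qed
    show ?thesis by (rule set_eqI) (simp only: mem if_splits; auto)
  qed
  show ?case
  proof (cases "L = length f")
    case True
    with \<open>G n f n L = _\<close> show ?thesis by simp
  next
    case False
    hence "G n f n L = {}" using \<open>G n f n L = _\<close> by simp
    moreover have "real (L choose length f) * (c_fun n 0 \<theta> \<alpha>)^(L - length f) = 0"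
    proof (cases "L < length f")
      case True thus ?thesis by (simp add: binomial_eq_0)
    next
      case F: False
      with False have "L - length f > 0" by simp
      thus ?thesis by (simp add: c_zero)
    qed
    ultimately show ?thesis by simp
  qed
next
  case (Suc m)
  define N where "N = n + m"
  define k where "k = length f"
  define a where "a = pochhammer (\<theta>+\<alpha>) N"
  define b where "b = \<theta> + real n + real m"
  define P where "P = pochhammer (\<theta> + real n) m"
  define c where "c = c_fun n m \<theta> \<alpha>"
  define c' where "c' = c_fun n (Suc m) \<theta> \<alpha>"
  define W where "W = WW \<alpha> \<theta> n f"
  define T where "T = {h. is_ofa N h \<and> restr n h = f \<and> length h \<le> L}"
  have nN: "n \<le> N" by (simp add: N_def)
  have finT: "finite T"
  proof (rule finite_subset)
    show "T \<subseteq> {xs. set xs \<subseteq> Pow {1..N} \<and> length xs \<le> L}"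
      unfolding T_def is_ofa_def by blast
    show "finite {xs. set xs \<subseteq> Pow {1..N} \<and> length xs \<le> L}"
      by (rule finite_lists_length_le) simp
  qed
  have "(\<Sum>g\<in>G n f (n + Suc m) L. WW \<alpha> \<theta> (n + Suc m) g) = (\<Sum>g\<in>G n f (Suc N) L. WW \<alpha> \<theta> (Suc N) g)"
    by (simp add: N_def)
  also have "\<dots> = (\<Sum>h\<in>T. \<Sum>g\<in>{g \<in> G n f (Suc N) L. restr N g = h}. WW \<alpha> \<theta> (Suc N) g)"
  proof (rule sum.group[symmetric, OF finite_G finT])
    show "restr N ` G n f (Suc N) L \<subseteq> T"
      using length_restr restr_restr[OF nN] is_ofa_restr by (auto simp: G_def T_def)
  qed
  also have "\<dots> = (\<Sum>h\<in>T. \<Sum>g\<in>Ext N h L. WW \<alpha> \<theta> (Suc N) g)"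
  proof (rule sum.cong[OF refl])
    fix h assume "h \<in> T"
    hence "restr n h = f" by (simp add: T_def)
    hence "{g \<in> G n f (Suc N) L. restr N g = h} = Ext N h L"
      using restr_restr[OF nN] by (auto simp: G_def Ext_def)
    thus "(\<Sum>g\<in>{g \<in> G n f (Suc N) L. restr N g = h}. WW \<alpha> \<theta> (Suc N) g) = (\<Sum>g\<in>Ext N h L. WW \<alpha> \<theta> (Suc N) g)"
      by simp
  qed
  also have "\<dots> = (\<Sum>h\<in>T. real (L choose length h) * a^(L - length h) * b^(length h) * WW \<alpha> \<theta> N h)"
    by (rule sum.cong[OF refl], subst one_step) (auto simp: T_def a_def b_def N_def add.assoc)
  also have "\<dots> = (\<Sum>L'\<in>{..L}. \<Sum>h\<in>{h \<in> T. length h = L'}. real (L choose length h) * a^(L - length h) * b^(length h) * WW \<alpha> \<theta> N h)"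
    by (rule sum.group[symmetric, OF finT]) (auto simp: T_def)
  also have "\<dots> = (\<Sum>L'\<in>{..L}. real (L choose L') * a^(L - L') * b^L' * (\<Sum>h\<in>G n f N L'. WW \<alpha> \<theta> N h))"
  proof (rule sum.cong[OF refl])
    fix L' assume "L' \<in> {..L}"
    hence e: "{h \<in> T. length h = L'} = G n f N L'" by (auto simp: T_def G_def)
    show "(\<Sum>h\<in>{h \<in> T. length h = L'}. real (L choose length h) * a^(L - length h) * b^(length h) * WW \<alpha> \<theta> N h) =
      real (L choose L') * a^(L - L') * b^L' * (\<Sum>h\<in>G n f N L'. WW \<alpha> \<theta> N h)"
      unfolding sum_distrib_left e by (intro sum.cong refl) (simp add: G_def)
  qed
  also have "\<dots> = (\<Sum>L'\<in>{..L}. real (L choose L') * a^(L - L') * b^L' * (real (L' choose k) * P^L' * c^(L' - k) * W))"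
    using Suc.IH by (simp add: N_def k_def P_def c_def W_def)
  also have "\<dots> = W * (\<Sum>L'\<le>L. real (L choose L') * a^(L-L') * (b*P)^L' * (real (L' choose k) * c^(L'-k)))"
    unfolding sum_distrib_left power_mult_distrib
    by (rule sum.cong[OF refl]) (simp add: ac_simps)
  also have "\<dots> = W * (real (L choose k) * (b*P)^k * ((b*P)*c + a)^(L-k))"
    by (simp add: binom_sum)
  also have cc: "(b*P)*c + a = (b*P)*c'"
    using c_rec[OF ab, of m] unfolding b_def P_def c_def c'_def a_def N_def pochhammer_Suc
    by (simp add: algebra_simps)
  also have "W * (real (L choose k) * (b*P)^k * ((b*P)*c')^(L-k)) = real (L choose k) * (b*P)^L * c'^(L-k) * W"
  proof (cases "k \<le> L")
    case True
    hence "(b*P)^L = (b*P)^k * (b*P)^(L-k)" by (simp flip: power_add)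
    thus ?thesis by (simp add: power_mult_distrib)
  next
    case False thus ?thesis by (simp add: binomial_eq_0)
  qed
  finally show ?case
    by (simp add: k_def P_def b_def c'_def W_def pochhammer_Suc mult.commute)
qed

theorem theorem3:
  fixes M :: "'a measure" and F :: "nat \<Rightarrow> 'a \<Rightarrow> nat set list"
    and \<alpha> \<theta> :: real and V :: "nat \<Rightarrow> nat \<Rightarrow> real"
    and n m k y :: nat and f :: "nat set list"
  assumes "prob_space M"
    and "gibbs_weights \<alpha> \<theta> V"
    and ofa: "\<And>N \<omega>. \<omega> \<in> space M \<Longrightarrow> is_ofa N (F N \<omega>)"
    and meas: "\<And>N g. {\<omega> \<in> space M. F N \<omega> = g} \<in> sets M"
    and efpf: "\<And>N g. N \<ge> 1 \<Longrightarrow> is_ofa N g \<Longrightarrow>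
                 measure M {\<omega> \<in> space M. F N \<omega> = g} = gibbs_efpf \<alpha> \<theta> V N (map card g)"
    and consistent: "\<And>N \<omega>. \<omega> \<in> space M \<Longrightarrow> F N \<omega> = restr N (F (Suc N) \<omega>)"
    and "n \<ge> 1" and "m \<ge> 1"
    and "is_ofa n f" and "length f = k"
    and pos: "measure M {\<omega> \<in> space M. F n \<omega> = f} > 0"
  shows "measure M {\<omega> \<in> space M. length (F (n + m) \<omega>) - length (F n \<omega>) = y \<and> F n \<omega> = f}
           / measure M {\<omega> \<in> space M. F n \<omega> = f}
         = real ((k + y) choose k) * V (n + m) (k + y) / V n k
           * (pochhammer (\<theta> + real n) m) ^ (k + y) * (c_fun n m \<theta> \<alpha>) ^ y"
proof -
  interpret prob_space M by fact
  have ab: "\<alpha> < 1" "\<theta> > -\<alpha>" using assms(2) by (auto simp: gibbs_weights_def)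
  have Fr: "F n \<omega> = restr n (F (n + j) \<omega>)" if "\<omega> \<in> space M" for \<omega> j
  proof (induction j)
    case 0
    show ?case using restr_id[OF ofa[OF that, of n]] by simp
  next
    case (Suc j)
    have "F (n+j) \<omega> = restr (n+j) (F (Suc (n+j)) \<omega>)" by (rule consistent[OF that])
    hence "restr n (F (n+j) \<omega>) = restr n (F (n + Suc j) \<omega>)"
      using restr_restr[of n "n+j" "F (Suc (n+j)) \<omega>"] by simp
    thus ?case using Suc.IH by simp
  qed
  define Gs where "Gs = G n f (n+m) (k+y)"
  have E: "{\<omega> \<in> space M. length (F (n + m) \<omega>) - length (F n \<omega>) = y \<and> F n \<omega> = f}
     = (\<Union>g\<in>Gs. {\<omega> \<in> space M. F (n+m) \<omega> = g})"
  proof (intro set_eqI iffI)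
    fix \<omega> assume "\<omega> \<in> {\<omega> \<in> space M. length (F (n + m) \<omega>) - length (F n \<omega>) = y \<and> F n \<omega> = f}"
    hence w: "\<omega> \<in> space M" "length (F (n + m) \<omega>) - length (F n \<omega>) = y" "F n \<omega> = f" by auto
    have r: "restr n (F (n+m) \<omega>) = f" using Fr[OF w(1), of m] w(3) by simp
    have "length f \<le> length (F (n+m) \<omega>)" using length_restr[of n "F (n+m) \<omega>"] r by simp
    hence "length (F (n+m) \<omega>) = k + y" using w \<open>length f = k\<close> by simp
    hence "F (n+m) \<omega> \<in> Gs" using r ofa[OF w(1)] by (simp add: Gs_def G_def)
    thus "\<omega> \<in> (\<Union>g\<in>Gs. {\<omega> \<in> space M. F (n+m) \<omega> = g})" using w(1) by blast
  next
    fix \<omega> assume "\<omega> \<in> (\<Union>g\<in>Gs. {\<omega> \<in> space M. F (n+m) \<omega> = g})"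
    hence w: "\<omega> \<in> space M" "F (n+m) \<omega> \<in> Gs" by auto
    hence "restr n (F (n+m) \<omega>) = f" "length (F (n+m) \<omega>) = k + y" by (simp_all add: Gs_def G_def)
    moreover have "F n \<omega> = restr n (F (n+m) \<omega>)" using Fr[OF w(1)] by simp
    ultimately show "\<omega> \<in> {\<omega> \<in> space M. length (F (n + m) \<omega>) - length (F n \<omega>) = y \<and> F n \<omega> = f}"
      using w(1) \<open>length f = k\<close> by simp
  qed
  have "measure M (\<Union>g\<in>Gs. {\<omega> \<in> space M. F (n+m) \<omega> = g}) = (\<Sum>g\<in>Gs. measure M {\<omega> \<in> space M. F (n+m) \<omega> = g})"
    by (rule finite_measure_finite_Union) (auto simp: Gs_def finite_G meas disjoint_family_on_def)
  also have "\<dots> = (\<Sum>g\<in>Gs. V (n+m) (k+y) * WW \<alpha> \<theta> (n+m) g)"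
  proof (rule sum.cong[OF refl])
    fix g assume "g \<in> Gs"
    hence "is_ofa (n+m) g" "length g = k+y" by (simp_all add: Gs_def G_def)
    thus "measure M {\<omega> \<in> space M. F (n+m) \<omega> = g} = V (n+m) (k+y) * WW \<alpha> \<theta> (n+m) g"
      using efpf[of "n+m" g] \<open>n \<ge> 1\<close> by (simp add: efpf_WW)
  qed
  also have "\<dots> = V (n+m) (k+y) * (real ((k+y) choose k) * (pochhammer (\<theta> + real n) m)^(k+y)
       * (c_fun n m \<theta> \<alpha>)^y * WW \<alpha> \<theta> n f)"
    unfolding sum_distrib_left[symmetric] Gs_def multi[OF assms(9) ab \<open>n \<ge> 1\<close>]
    using \<open>length f = k\<close> by simp
  finally have num: "measure M {\<omega> \<in> space M. length (F (n + m) \<omega>) - length (F n \<omega>) = y \<and> F n \<omega> = f}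
     = V (n+m) (k+y) * (real ((k+y) choose k) * (pochhammer (\<theta> + real n) m)^(k+y)
       * (c_fun n m \<theta> \<alpha>)^y * WW \<alpha> \<theta> n f)" unfolding E .
  have den: "measure M {\<omega> \<in> space M. F n \<omega> = f} = V n k * WW \<alpha> \<theta> n f"
    using efpf[OF \<open>n \<ge> 1\<close> assms(9)] \<open>length f = k\<close> by (simp add: efpf_WW)
  have nz: "V n k \<noteq> 0" "WW \<alpha> \<theta> n f \<noteq> 0" using pos den by auto
  show ?thesis unfolding num den using nz by (simp add: field_simps)
qed

end
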